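(* Let $m\ge1$ be an integer, let $\sigma\in\{+1,-1\}$, and let $\theta_1,\dots,\theta_s\in(\pi/2,\pi)$. Let $\lambda_1,\dots,\lambda_t$ be complex numbers such that: - $\operatorname{Re}(\lambda_j)>0$ and $|\lambda_j|\ne1$ for all $j$; - no two of the $\lambda_j$ are reciprocal to each other; - the multiset $\{\lambda_j\}\cup\{\lambda_j^{-1}\}$ is closed under complex conjugation. Define $$H(z)=\nu\!\left(\sigma\,\beta(\eta(z))^{m}\prod_{k=1}^{s}\beta\!\left(-\frac{\eta(z)}{\cos\theta_k}\right)\prod_{j=1}^{t}\beta\!\left(\frac{\eta(z)}{\eta(\lambda_j)}\right)\right).$$ Then $H$ is a 0-SYM filter, and the only points of the stopband at which $H$ vanishes are $e^{i\theta_k}$ and $e^{-i\theta_k}$ ($k=1,\dots,s$), together with $-1$, which is a zero of multiplicity $2m$. In total these are the $2(m+s)$ values $e^{\pm i\theta_1},\dots,e^{\pm i\theta_s}$ and $-1$ repeated $2m$ times.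
   Context: A 0-SYM filter is a rational function $H(z)$ with real coefficients satisfying $H(z)^2+H(-z)^2=1$ and $H(z)=H(z^{-1})$. The functions used are: - $\beta(z)=\frac{1-z}{1+z}$; - $\eta(z)=\frac{z+z^{-1}}{2}$; - $\nu(z)=\frac{1+\sqrt2\,z}{1+\sqrt2\,z+z^2}$. The stopband is the arc $\{e^{i\xi}:\pi/2<|\xi|\le\pi\}$ of the unit circle. *)

theory Defs
  imports "HOL-Analysis.Analysis" "HOL-Computational_Algebra.Polynomial" "HOL-Library.Multiset"
begin

definition beta :: "complex \<Rightarrow> complex" where
  "beta w = (1 - w) / (1 + w)"

definition eta :: "complex \<Rightarrow> complex" where
  "eta z = (z + inverse z) / 2"

definition nu :: "complex \<Rightarrow> complex" where
  "nu w = (1 + of_real (sqrt 2) * w) / (1 + of_real (sqrt 2) * w + w ^ 2)"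

abbreviation cpoly :: "real poly \<Rightarrow> complex poly" where
  "cpoly p \<equiv> map_poly complex_of_real p"

text \<open>The function H (given pointwise) coincides, as a rational function, with p/q,
  where p, q have real coefficients: equality off a finite set.\<close>
definition rat_repr :: "(complex \<Rightarrow> complex) \<Rightarrow> real poly \<Rightarrow> real poly \<Rightarrow> bool" where
  "rat_repr H p q \<longleftrightarrow> q \<noteq> 0 \<and>
     finite {z. H z \<noteq> poly (cpoly p) z / poly (cpoly q) z}"

text \<open>0-SYM filter: a rational function with real coefficients satisfying
  H(z)^2 + H(-z)^2 = 1 and H(z) = H(1/z) (identities of rational functions,
  i.e. holding outside a finite set of points).\<close>
definition zero_sym :: "(complex \<Rightarrow> complex) \<Rightarrow> bool" where
  "zero_sym H \<longleftrightarrow> (\<exists>p q. rat_repr H p q) \<and>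
     finite {z. H z ^ 2 + H (- z) ^ 2 \<noteq> 1} \<and>
     finite {z. z \<noteq> 0 \<and> H z \<noteq> H (inverse z)}"

definition stopband :: "complex set" where
  "stopband = {cis xi | xi. pi / 2 < \<bar>xi\<bar> \<and> \<bar>xi\<bar> \<le> pi}"

definition Hfilt :: "nat \<Rightarrow> real \<Rightarrow> nat \<Rightarrow> (nat \<Rightarrow> real) \<Rightarrow> nat \<Rightarrow> (nat \<Rightarrow> complex)
    \<Rightarrow> complex \<Rightarrow> complex" where
  "Hfilt m \<sigma> s \<theta> t lam z = nu (of_real \<sigma> * beta (eta z) ^ m
      * (\<Prod>k<s. beta (- eta z / of_real (cos (\<theta> k))))
      * (\<Prod>j<t. beta (eta z / eta (lam j))))"

end

theory Submission imports Defs "HOL-Computational_Algebra.Fundamental_Theorem_Algebra" begin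

definition Lp :: "complex \<Rightarrow> complex poly" where "Lp a = [:1, -2*a, 1:]"

lemma poly_Lp: "poly (Lp a) z = z^2 - 2*a*z + 1"
  by (simp add: Lp_def algebra_simps power2_eq_square)

lemma Lp_nz: "Lp a \<noteq> 0" by (simp add: Lp_def)

lemma poly_Lp_neg: "poly (Lp a) (-z) = poly (Lp (-a)) z"
  by (simp add: poly_Lp)

lemma poly_Lp_0: "poly (Lp a) 0 = 1" by (simp add: poly_Lp)

lemma Lp_root_eq: assumes "poly (Lp a) z = 0" "poly (Lp b) z = 0" shows "a = b"
proof -
  have "z \<noteq> 0" using assms(1) by (auto simp: poly_Lp)
  from assms have "2*a*z = 2*b*z" by (simp add: poly_Lp algebra_simps)
  with \<open>z \<noteq> 0\<close> show ?thesis by simp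
qed

lemma cnj_Lp: "map_poly cnj (Lp a) = Lp (cnj a)"
  by (simp add: Lp_def map_poly_pCons)

lemma unit_root: assumes "cmod z = 1" "poly (Lp a) z = 0" shows "a = of_real (Re z)"
proof -
  have zc: "z * cnj z = 1" using assms(1)
    by (metis complex_norm_square mult.commute of_real_1 power_one)
  have "z^2 - 2*a*z + z * cnj z = 0" using assms(2) zc by (simp add: poly_Lp)
  hence "z * (z + cnj z - 2*a) = 0" by (simp add: algebra_simps power2_eq_square)
  moreover have "z \<noteq> 0" using assms(1) by auto
  ultimately have "z + cnj z = 2*a" by simp
  thus ?thesis by (simp add: complex_add_cnj)
qed

lemma poly_Lp_unit: assumes "cmod z = 1" shows "poly (Lp a) z = z * (2 * of_real (Re z) - 2*a)"
proof -
  have zc: "z * cnj z = 1" using assms(1)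
    by (metis complex_norm_square mult.commute of_real_1 power_one)
  have "poly (Lp a) z = z^2 - 2*a*z + z * cnj z" using zc by (simp add: poly_Lp)
  also have "\<dots> = z * (z + cnj z - 2*a)" by (simp add: algebra_simps power2_eq_square)
  finally show ?thesis by (simp add: complex_add_cnj)
qed

lemma Lp_mono: assumes "cmod z = 1" "Re z < 0" "Re a > 0"
  shows "cmod (poly (Lp (-a)) z) \<le> cmod (poly (Lp a) z)" "poly (Lp a) z \<noteq> 0"
proof -
  have "cmod (2 * of_real (Re z) + 2*a) \<le> cmod (2 * of_real (Re z) - 2*a)"
    unfolding cmod_def using assms
    using mult_pos_neg[of "Re a" "Re z"]
    by (intro real_sqrt_le_mono) (simp add: power2_eq_square algebra_simps)
  thus "cmod (poly (Lp (-a)) z) \<le> cmod (poly (Lp a) z)"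
    using assms by (simp add: poly_Lp_unit norm_mult)
  show "poly (Lp a) z \<noteq> 0"
  proof
    assume "poly (Lp a) z = 0"
    from unit_root[OF assms(1) this] assms show False by simp
  qed
qed

lemma eta_real_unit: assumes "eta w = of_real r" "\<bar>r\<bar> \<le> 1" "w \<noteq> 0" shows "cmod w = 1"
proof -
  have "w + inverse w = 2 * of_real r" using assms(1) by (simp add: eta_def field_simps)
  hence "w * w + 1 = 2 * of_real r * w" using assms(3) by (simp add: field_simps)
  hence e1: "Re w * Re w - Im w * Im w + 1 = 2 * r * Re w" and e2: "2 * Re w * Im w = 2 * r * Im w"
    by (auto simp: complex_eq_iff)
  have r2: "r * r \<le> 1" using assms(2) by (metis abs_le_square_iff abs_one mult_1 power2_eq_square)
  have "Re w * Re w + Im w * Im w = 1"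
  proof (cases "Im w = 0")
    case True
    hence "(Re w - r) * (Re w - r) = r * r - 1" using e1 by (simp add: algebra_simps)
    moreover have "0 \<le> (Re w - r) * (Re w - r)" by simp
    ultimately have h: "(Re w - r) * (Re w - r) = 0 \<and> r * r = 1" using r2 by linarith
    hence "Re w = r" by simp
    thus ?thesis using True h by simp
  next
    case False
    hence "Re w = r" using e2 by simp
    thus ?thesis using e1 by (simp add: algebra_simps)
  qed
  thus ?thesis by (simp add: cmod_def power2_eq_square)
qed

lemma beta_eta: assumes "z \<noteq> 0" "d \<noteq> 0"
  shows "beta (eta z / d) = - poly (Lp d) z / poly (Lp (-d)) z"
proof -
  have "1 - eta z / d = (d - eta z) / d" "1 + eta z / d = (d + eta z) / d"
    using assms by (simp_all add: field_simps)
  hence "beta (eta z / d) = (d - eta z) / (d + eta z)"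
    using assms by (simp add: beta_def)
  also have "d - eta z = - poly (Lp d) z / (2*z)" using assms
    by (simp add: eta_def poly_Lp field_simps power2_eq_square)
  also have "d + eta z = poly (Lp (-d)) z / (2*z)" using assms
    by (simp add: eta_def poly_Lp field_simps power2_eq_square)
  finally show ?thesis using assms by (simp add: divide_simps)
qed

lemma nu_frac: assumes "b \<noteq> 0" "\<tau> * \<tau> = 1"
  shows "nu (of_real \<tau> * a / b) =
     (b * (b + of_real (sqrt 2 * \<tau>) * a)) / (a^2 + of_real (sqrt 2 * \<tau>) * (a * b) + b^2)"
proof -
  let ?w = "of_real \<tau> * a / b"
  have tt: "(of_real \<tau> :: complex) * of_real \<tau> = 1" using assms(2)
    by (metis of_real_1 of_real_mult)
  have num: "b^2 * (1 + of_real (sqrt 2) * ?w) = b * (b + of_real (sqrt 2 * \<tau>) * a)"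
    using assms(1) by (simp add: field_simps power2_eq_square)
  have den: "b^2 * (1 + of_real (sqrt 2) * ?w + ?w^2) = a^2 + of_real (sqrt 2 * \<tau>) * (a * b) + b^2"
    using assms(1) tt by (simp add: field_simps power2_eq_square)
  have "nu ?w = (b^2 * (1 + of_real (sqrt 2) * ?w)) / (b^2 * (1 + of_real (sqrt 2) * ?w + ?w^2))"
    unfolding nu_def using assms(1) by (subst mult_divide_mult_cancel_left) auto
  thus ?thesis by (simp only: num den)
qed

lemma map_poly_cnj_mult: "map_poly cnj (p * q) = map_poly cnj p * map_poly cnj q"
  by (rule poly_eq_poly_eq_iff[THEN iffD1]) (auto simp: fun_eq_iff)
lemma map_poly_cnj_add: "map_poly cnj (p + q) = map_poly cnj p + map_poly cnj q"
  by (rule poly_eq_poly_eq_iff[THEN iffD1]) (auto simp: fun_eq_iff)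
lemma map_poly_cnj_power: "map_poly cnj (p ^ n) = map_poly cnj p ^ n"
  by (induction n) (auto simp: map_poly_cnj_mult)
lemma map_poly_cnj_prod: "map_poly cnj (\<Prod>i\<in>A. f i) = (\<Prod>i\<in>A. map_poly cnj (f i))"
  by (induction A rule: infinite_finite_induct) (auto simp: map_poly_cnj_mult)
lemma map_poly_cnj_smult: "map_poly cnj (smult (of_real r) p) = smult (of_real r) (map_poly cnj p)"
  by (rule poly_eq_poly_eq_iff[THEN iffD1]) (auto simp: fun_eq_iff)

lemma cpoly_mult: "cpoly (p * q) = cpoly p * cpoly q"
  by (rule poly_eqI) (simp add: coeff_mult coeff_map_poly)

lemma real_poly_ex: assumes "map_poly cnj P = P" shows "cpoly (map_poly Re P) = P"
proof (rule poly_eqI)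
  fix n
  have "cnj (coeff P n) = coeff P n" using assms
    by (metis coeff_map_poly complex_cnj_zero)
  hence "Im (coeff P n) = 0" by (simp add: complex_eq_iff)
  thus "coeff (cpoly (map_poly Re P)) n = coeff P n"
    by (simp add: coeff_map_poly complex_eq_iff)
qed

lemma coprime_real:
  fixes p q :: "real poly"
  assumes "q \<noteq> 0" "\<And>z. poly (cpoly p) z = 0 \<Longrightarrow> poly (cpoly q) z \<noteq> 0"
  shows "coprime p q"
proof (rule coprimeI)
  fix g assume g: "g dvd p" "g dvd q"
  have g0: "g \<noteq> 0" using g(2) assms(1) by auto
  show "is_unit g"
  proof (cases "degree g = 0")
    case True
    thus ?thesis using is_unit_iff_degree[OF g0] by blast
  next
    case False
    hence "degree (cpoly g) \<noteq> 0" by (simp add: degree_map_poly)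
    hence "\<not> constant (poly (cpoly g))" by (simp add: constant_degree)
    then obtain z where z: "poly (cpoly g) z = 0" using fundamental_theorem_of_algebra by blast
    obtain r1 where r1: "p = g * r1" using g(1) by (meson dvd_def)
    obtain r2 where r2: "q = g * r2" using g(2) by (meson dvd_def)
    have "poly (cpoly p) z = 0" using z by (subst r1) (simp add: cpoly_mult)
    moreover have "poly (cpoly q) z = 0" using z by (subst r2) (simp add: cpoly_mult)
    ultimately show ?thesis using assms(2) by blast
  qed
qed

lemma order_prod: assumes "finite A" "\<And>i. i \<in> A \<Longrightarrow> f i \<noteq> 0"
  shows "order z (\<Prod>i\<in>A. f i) = (\<Sum>i\<in>A. order z (f i))"
  using assms by (induction A rule: finite_induct) (auto simp: order_mult)

lemma order_pow: assumes "p \<noteq> 0" shows "order z (p ^ n) = n * order z p"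
  using assms by (induction n) (auto simp: order_mult)

lemma order_lin: "order z [:-w, 1:] = (if z = w then 1 else 0)"
  using order_power_n_n[of w 1] by (auto intro: order_0I)

lemma Lp_cos: "Lp (of_real (cos th)) = [:- cis th, 1:] * [:- cis (- th), 1:]"
  by (simp add: Lp_def cis_mult complex_eq_iff)

lemma Lp_m1: "Lp (-1) = [:- (-1), 1:] ^ 2"
  by (simp add: Lp_def power2_eq_square)

lemma prod_neg_div: "(\<Prod>k\<in>A. - x k / y k) = (-1) ^ card A * prod x A / prod y A" for x y :: "_ \<Rightarrow> complex"
proof -
  have "(\<Prod>k\<in>A. - x k / y k) = (\<Prod>k\<in>A. (-1) * (x k / y k))" by simp
  also have "\<dots> = (-1) ^ card A * (prod x A / prod y A)"
    by (simp only: prod.distrib prod_dividef prod_constant)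
  finally show ?thesis by simp
qed

lemma rearr: "(sg::complex) * ((-1)^m * (A/B)) * ((-1)^k * C / D) * ((-1)^n * E / F) = (sg * (-1)^(m+k+n)) * (A*C*E) / (B*D*F)"
  by (simp add: power_add divide_inverse inverse_mult_distrib mult_ac)

lemma key_id: fixes a b k :: complex assumes "k * k = 2"
  shows "(b*(b+k*a))^2 + (a*(a+k*b))^2 = (a^2+k*(a*b)+b^2)^2"
proof -
  have "(b*(b+k*a))^2 + (a*(a+k*b))^2 = (a^2+k*(a*b)+b^2)^2 + (k*k - 2)*(a^2*b^2)"
    by (simp add: power2_eq_square algebra_simps)
  thus ?thesis using assms by simp
qed

lemma sum_ind: "(\<Sum>k<s. if P k then 1 else 0) = card {k. k < s \<and> P k}" for s :: nat
proof (induction s)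
  case (Suc s)
  show ?case
  proof (cases "P s")
    case True
    hence "{k. k < Suc s \<and> P k} = insert s {k. k < s \<and> P k}" by (auto simp: less_Suc_eq)
    moreover have "card (insert s {k. k < s \<and> P k}) = Suc (card {k. k < s \<and> P k})"
      by (rule card_insert_disjoint) auto
    ultimately show ?thesis using Suc True by simp
  next
    case False
    hence "{k. k < Suc s \<and> P k} = {k. k < s \<and> P k}" by (auto simp: less_Suc_eq)
    thus ?thesis using Suc False by simp
  qed
qed simp

lemma stopband_prop: assumes "z \<in> stopband" shows "cmod z = 1" "Re z < 0"
proof -
  obtain xi where z: "z = cis xi" "pi/2 < \<bar>xi\<bar>" "\<bar>xi\<bar> \<le> pi"
    using assms by (auto simp: stopband_def)
  show "cmod z = 1" using z by simp
  have "cos \<bar>xi\<bar> < 0" using z by (intro cos_lt_zero_pi) auto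
  thus "Re z < 0" using z by simp
qed

lemma m1_stopband: "-1 \<in> stopband"
  unfolding stopband_def by (rule CollectI, rule exI[of _ pi]) simp

lemma eta_cnj: "eta (cnj w) = cnj (eta w)" by (simp add: eta_def)
lemma eta_inv: "eta (inverse w) = eta w" by (simp add: eta_def add.commute)
lemma Re_eta_pos: "Re w > 0 \<Longrightarrow> Re (eta w) > 0"
proof -
  assume "Re w > 0"
  moreover hence "Re (inverse w) > 0" by (simp add: sum_power2_gt_zero_iff)
  ultimately show ?thesis by (simp add: eta_def)
qed

theorem corollary3:
  fixes m s t :: nat and \<sigma> :: real and \<theta> :: "nat \<Rightarrow> real" and lam :: "nat \<Rightarrow> complex"
  assumes "m \<ge> 1"
    and "\<sigma> \<in> {1, -1}"
    and "\<forall>k<s. pi / 2 < \<theta> k \<and> \<theta> k < pi"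
    and "\<forall>j<t. Re (lam j) > 0 \<and> cmod (lam j) \<noteq> 1"
    and "\<forall>i<t. \<forall>j<t. i \<noteq> j \<longrightarrow> lam i * lam j \<noteq> 1"
    and "image_mset cnj (image_mset lam (mset [0..<t]) + image_mset (\<lambda>j. inverse (lam j)) (mset [0..<t]))
         = image_mset lam (mset [0..<t]) + image_mset (\<lambda>j. inverse (lam j)) (mset [0..<t])"
  shows "zero_sym (Hfilt m \<sigma> s \<theta> t lam) \<and>
    (\<exists>p q. rat_repr (Hfilt m \<sigma> s \<theta> t lam) p q \<and> coprime p q \<and> p \<noteq> 0 \<and>
       (\<forall>z\<in>stopband. order z (cpoly p) =
          (if z = -1 then 2 * m else 0)
          + card {k. k < s \<and> z = cis (\<theta> k)} + card {k. k < s \<and> z = cis (- \<theta> k)}))"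
proof -
  define c where "c k = complex_of_real (cos (\<theta> k))" for k
  define e where "e j = eta (lam j)" for j
  define Ap where "Ap = Lp 1 ^ m * (\<Prod>k<s. Lp (- c k)) * (\<Prod>j<t. Lp (e j))"
  define Bp where "Bp = Lp (-1) ^ m * (\<Prod>k<s. Lp (c k)) * (\<Prod>j<t. Lp (- e j))"
  define \<tau> :: real where "\<tau> = \<sigma> * (-1)^(m+s+t)"
  define \<kappa> :: complex where "\<kappa> = of_real (sqrt 2 * \<tau>)"
  define Pp where "Pp = Bp * (Bp + smult \<kappa> Ap)"
  define Qp where "Qp = Ap^2 + smult \<kappa> (Ap*Bp) + Bp^2"
  define H where "H = Hfilt m \<sigma> s \<theta> t lam"
  have ss: "\<sigma> * \<sigma> = 1" using assms(2) by auto
  have tt: "\<tau> * \<tau> = 1"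
  proof -
    have "\<tau> * \<tau> = (\<sigma> * \<sigma>) * ((-1)^(m+s+t) * (-1)^(m+s+t))" by (simp add: \<tau>_def algebra_simps)
    also have "\<dots> = 1" using ss by (simp flip: power_add)
    finally show ?thesis .
  qed
  have kk: "\<kappa> * \<kappa> = 2"
  proof -
    have r: "(sqrt 2 * \<tau>) * (sqrt 2 * \<tau>) = 2"
    proof -
      have "(sqrt 2 * \<tau>) * (sqrt 2 * \<tau>) = (sqrt 2 * sqrt 2) * (\<tau> * \<tau>)" by (simp only: mult_ac)
      thus ?thesis using tt by simp
    qed
    have "\<kappa> * \<kappa> = of_real ((sqrt 2 * \<tau>) * (sqrt 2 * \<tau>))" by (simp only: \<kappa>_def of_real_mult)
    thus ?thesis using r by simp
  qed
  have cneg: "Re (c k) < 0" if "k < s" for k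
  proof -
    have "cos (\<theta> k) < 0" using assms(3) that by (intro cos_lt_zero_pi) auto
    thus ?thesis by (simp add: c_def)
  qed
  have cnz: "c k \<noteq> 0" if "k < s" for k using cneg[OF that] by auto
  have epos: "Re (e j) > 0" if "j < t" for j
    using assms(4) that by (simp add: e_def Re_eta_pos)
  have enz: "e j \<noteq> 0" if "j < t" for j using epos[OF that] by auto
  have e_nonunit: "\<not> (e j = of_real r \<and> \<bar>r\<bar> \<le> 1)" if "j < t" for j r
  proof
    assume h: "e j = of_real r \<and> \<bar>r\<bar> \<le> 1"
    have "lam j \<noteq> 0" using assms(4) that by auto
    hence "cmod (lam j) = 1" using h eta_real_unit[of "lam j" r] by (simp add: e_def)
    thus False using assms(4) that by auto
  qed
  have polyA: "poly Ap z = poly (Lp 1) z ^ m * (\<Prod>k<s. poly (Lp (- c k)) z) * (\<Prod>j<t. poly (Lp (e j)) z)" for z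
    by (simp add: Ap_def poly_prod)
  have polyB: "poly Bp z = poly (Lp (-1)) z ^ m * (\<Prod>k<s. poly (Lp (c k)) z) * (\<Prod>j<t. poly (Lp (- e j)) z)" for z
    by (simp add: Bp_def poly_prod)
  have ABneg: "poly Ap (-z) = poly Bp z" "poly Bp (-z) = poly Ap z" for z
    by (simp_all add: polyA polyB poly_Lp_neg)
  have Ap_nz: "Ap \<noteq> 0" by (simp add: Ap_def Lp_nz)
  have Bp_nz: "Bp \<noteq> 0" by (simp add: Bp_def Lp_nz)
  have polyP: "poly Pp z = poly Bp z * (poly Bp z + \<kappa> * poly Ap z)" for z by (simp add: Pp_def)
  have polyQ: "poly Qp z = poly Ap z ^ 2 + \<kappa> * (poly Ap z * poly Bp z) + poly Bp z ^ 2" for z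
    by (simp add: Qp_def)

  have Hz: "H z = poly Pp z / poly Qp z" if z: "z \<noteq> 0" "poly Bp z \<noteq> 0" for z
  proof -
    have b1: "beta (eta z) = - poly (Lp 1) z / poly (Lp (-1)) z" using beta_eta[of z 1] z by simp
    have b2: "(\<Prod>k<s. beta (- eta z / of_real (cos (\<theta> k)))) = (\<Prod>k<s. - poly (Lp (- c k)) z / poly (Lp (c k)) z)"
    proof (rule prod.cong)
      fix k assume "k \<in> {..<s}"
      hence "c k \<noteq> 0" using cnz by auto
      thus "beta (- eta z / of_real (cos (\<theta> k))) = - poly (Lp (- c k)) z / poly (Lp (c k)) z"
        using beta_eta[of z "- c k"] z by (simp add: c_def)
    qed simp
    have b3: "(\<Prod>j<t. beta (eta z / eta (lam j))) = (\<Prod>j<t. - poly (Lp (e j)) z / poly (Lp (- e j)) z)"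
    proof (rule prod.cong)
      fix j assume "j \<in> {..<t}"
      hence "e j \<noteq> 0" using enz by auto
      thus "beta (eta z / eta (lam j)) = - poly (Lp (e j)) z / poly (Lp (- e j)) z"
        using beta_eta[of z "e j"] z by (simp add: e_def)
    qed simp
    have "H z = nu (of_real \<sigma> * (- poly (Lp 1) z / poly (Lp (-1)) z) ^ m
        * (\<Prod>k<s. - poly (Lp (- c k)) z / poly (Lp (c k)) z)
        * (\<Prod>j<t. - poly (Lp (e j)) z / poly (Lp (- e j)) z))"
      unfolding H_def Hfilt_def b1 b2 b3 by (rule refl)
    also have "of_real \<sigma> * (- poly (Lp 1) z / poly (Lp (-1)) z) ^ m
        * (\<Prod>k<s. - poly (Lp (- c k)) z / poly (Lp (c k)) z)
        * (\<Prod>j<t. - poly (Lp (e j)) z / poly (Lp (- e j)) z) = of_real \<tau> * poly Ap z / poly Bp z"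
    proof -
      have e1: "(- poly (Lp 1) z / poly (Lp (-1)) z) ^ m = (-1)^m * (poly (Lp 1) z ^ m / poly (Lp (-1)) z ^ m)"
      proof -
        have "- poly (Lp 1) z / poly (Lp (-1)) z = (-1) * (poly (Lp 1) z / poly (Lp (-1)) z)" by simp
        thus ?thesis by (simp only: power_mult_distrib power_divide)
      qed
      have e2: "of_real \<tau> = (of_real \<sigma> * (-1)^(m+s+t) :: complex)" by (simp add: \<tau>_def)
      show ?thesis unfolding e1 prod_neg_div polyA polyB card_lessThan e2 by (rule rearr)
    qed
    also have "nu (of_real \<tau> * poly Ap z / poly Bp z) = poly Pp z / poly Qp z"
      using nu_frac[OF z(2) tt, of "poly Ap z"] by (simp add: polyP polyQ \<kappa>_def)
    finally show ?thesis .
  qed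
  have fin1: "finite {z. H z \<noteq> poly Pp z / poly Qp z}"
  proof (rule finite_subset)
    show "{z. H z \<noteq> poly Pp z / poly Qp z} \<subseteq> insert 0 {z. poly Bp z = 0}" using Hz by auto
    show "finite (insert 0 {z. poly Bp z = 0})" using poly_roots_finite[OF Bp_nz] by simp
  qed

  define X where "X = mset [0..<t]"
  have ee: "e = (\<lambda>j. eta (lam j))" by (rule ext) (simp add: e_def)
  have MS: "image_mset (\<lambda>j. cnj (e j)) X = image_mset e X"
  proof -
    let ?M = "image_mset lam X" and ?N = "image_mset (\<lambda>j. inverse (lam j)) X"
    have "image_mset eta (image_mset cnj (?M + ?N)) = image_mset eta (?M + ?N)"
      using assms(6) by (simp add: X_def)
    hence "image_mset (\<lambda>j. cnj (e j)) X + image_mset (\<lambda>j. cnj (e j)) X = image_mset e X + image_mset e X"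
      by (simp add: image_mset.compositionality o_def eta_cnj eta_inv ee)
    hence h: "count (image_mset (\<lambda>j. cnj (e j)) X) a + count (image_mset (\<lambda>j. cnj (e j)) X) a
       = count (image_mset e X) a + count (image_mset e X) a" for a
      by (simp add: multiset_eq_iff)
    show ?thesis
    proof (rule multiset_eqI)
      fix a show "count (image_mset (\<lambda>j. cnj (e j)) X) a = count (image_mset e X) a" using h[of a] by linarith
    qed
  qed
  have prodE: "(\<Prod>j<t. f (cnj (e j))) = (\<Prod>j<t. f (e j))" for f :: "complex \<Rightarrow> complex poly"
  proof -
    have "(\<Prod>j<t. f (cnj (e j))) = prod_mset (image_mset f (image_mset (\<lambda>j. cnj (e j)) X))"
      by (simp add: prod_unfold_prod_mset mset_set_upto_eq_mset_upto X_def image_mset.compositionality o_def)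
    also have "\<dots> = prod_mset (image_mset f (image_mset e X))" by (simp only: MS)
    also have "\<dots> = (\<Prod>j<t. f (e j))"
      by (simp add: prod_unfold_prod_mset mset_set_upto_eq_mset_upto X_def image_mset.compositionality o_def)
    finally show ?thesis .
  qed
  have cnjA: "map_poly cnj Ap = Ap"
    using prodE[of Lp] by (simp add: Ap_def map_poly_cnj_mult map_poly_cnj_power map_poly_cnj_prod cnj_Lp c_def)
  have cnjB: "map_poly cnj Bp = Bp"
    using prodE[of "\<lambda>x. Lp (- x)"] by (simp add: Bp_def map_poly_cnj_mult map_poly_cnj_power map_poly_cnj_prod cnj_Lp c_def)
  have cnjP: "map_poly cnj Pp = Pp"
    by (simp only: Pp_def map_poly_cnj_mult map_poly_cnj_add \<kappa>_def map_poly_cnj_smult cnjA cnjB)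
  have cnjQ: "map_poly cnj Qp = Qp"
    by (simp only: Qp_def map_poly_cnj_mult map_poly_cnj_add map_poly_cnj_power \<kappa>_def map_poly_cnj_smult cnjA cnjB)
  define p where "p = map_poly Re Pp"
  define q where "q = map_poly Re Qp"
  have cp: "cpoly p = Pp" unfolding p_def by (rule real_poly_ex[OF cnjP])
  have cq: "cpoly q = Qp" unfolding q_def by (rule real_poly_ex[OF cnjQ])

  have Apos: "Re a > 0 \<Longrightarrow> poly (Lp a) z = 0 \<Longrightarrow> False" if "z \<in> stopband" for a z
    using Lp_mono(2)[OF stopband_prop[OF that]] by blast
  have A_nz: "poly Ap z \<noteq> 0" if "z \<in> stopband" for z
  proof -
    have "poly (Lp 1) z \<noteq> 0" using Apos[OF that, of 1] by auto
    moreover have "poly (Lp (- c k)) z \<noteq> 0" if "k < s" for k using Apos[OF \<open>z \<in> stopband\<close>, of "- c k"] cneg[OF that] by auto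
    moreover have "poly (Lp (e j)) z \<noteq> 0" if "j < t" for j using Apos[OF \<open>z \<in> stopband\<close>, of "e j"] epos[OF that] by auto
    ultimately show ?thesis by (simp add: polyA)
  qed
  have AB_le: "cmod (poly Bp z) \<le> cmod (poly Ap z)" if "z \<in> stopband" for z
  proof -
    note sp = stopband_prop[OF that]
    have f1: "cmod (poly (Lp (-1)) z) \<le> cmod (poly (Lp 1) z)" using Lp_mono(1)[OF sp, of 1] by simp
    have f2: "(\<Prod>k<s. cmod (poly (Lp (c k)) z)) \<le> (\<Prod>k<s. cmod (poly (Lp (- c k)) z))"
    proof (rule prod_mono)
      fix k assume "k \<in> {..<s}"
      hence "Re (- c k) > 0" using cneg by auto
      thus "0 \<le> cmod (poly (Lp (c k)) z) \<and> cmod (poly (Lp (c k)) z) \<le> cmod (poly (Lp (- c k)) z)"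
        using Lp_mono(1)[OF sp, of "- c k"] by simp
    qed
    have f3: "(\<Prod>j<t. cmod (poly (Lp (- e j)) z)) \<le> (\<Prod>j<t. cmod (poly (Lp (e j)) z))"
      by (rule prod_mono) (use Lp_mono(1)[OF sp] epos in auto)
    have "cmod (poly Bp z) = cmod (poly (Lp (-1)) z) ^ m * (\<Prod>k<s. cmod (poly (Lp (c k)) z)) * (\<Prod>j<t. cmod (poly (Lp (- e j)) z))"
      by (simp add: polyB norm_mult norm_power prod_norm)
    also have "\<dots> \<le> cmod (poly (Lp 1) z) ^ m * (\<Prod>k<s. cmod (poly (Lp (- c k)) z)) * (\<Prod>j<t. cmod (poly (Lp (e j)) z))"
      by (intro mult_mono power_mono f1 f2 f3 prod_nonneg mult_nonneg_nonneg zero_le_power) auto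
    also have "\<dots> = cmod (poly Ap z)"
      by (simp add: polyA norm_mult norm_power prod_norm)
    finally show ?thesis .
  qed
  have S_nz: "poly Bp z + \<kappa> * poly Ap z \<noteq> 0" if "z \<in> stopband" for z
  proof
    assume h: "poly Bp z + \<kappa> * poly Ap z = 0"
    have at: "\<bar>\<tau>\<bar> = 1" using assms(2) by (auto simp: \<tau>_def abs_mult power_abs)
    have ck: "cmod \<kappa> = sqrt 2" unfolding \<kappa>_def norm_of_real using at by (simp add: abs_mult)
    have "poly Bp z = - (\<kappa> * poly Ap z)" using h by (simp add: eq_neg_iff_add_eq_0)
    hence "cmod (poly Bp z) = cmod \<kappa> * cmod (poly Ap z)" by (simp only: norm_minus_cancel norm_mult)
    hence "cmod (poly Bp z) = sqrt 2 * cmod (poly Ap z)" by (simp only: ck)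
    moreover have "cmod (poly Ap z) > 0" using A_nz[OF that] by simp
    moreover have "sqrt 2 > (1::real)" by simp
    ultimately have "cmod (poly Bp z) > cmod (poly Ap z)" by simp
    thus False using AB_le[OF that] by simp
  qed
  have m1: "(-1::complex) \<in> stopband" by (rule m1_stopband)
  have B_m1: "poly Bp (-1) = 0"
    using assms(1) by (simp add: polyB poly_Lp)
  have Qp_nz: "Qp \<noteq> 0"
  proof
    assume "Qp = 0"
    hence "poly Qp (-1) = 0" by simp
    thus False using A_nz[OF m1] B_m1 by (simp add: polyQ)
  qed
  have S_pnz: "Bp + smult \<kappa> Ap \<noteq> 0"
  proof
    assume "Bp + smult \<kappa> Ap = 0"
    hence "poly (Bp + smult \<kappa> Ap) (-1) = 0" by simp
    thus False using S_nz[OF m1] by simp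
  qed
  have Pp_nz: "Pp \<noteq> 0" using Bp_nz S_pnz by (simp add: Pp_def)
  have p_nz: "p \<noteq> 0" using Pp_nz cp by auto
  have q_nz: "q \<noteq> 0" using Qp_nz cq by auto

  have Aroot: "\<exists>a. Re a > 0 \<and> poly (Lp a) z = 0" if "poly Ap z = 0" for z
  proof -
    from that consider "poly (Lp 1) z = 0" | k where "k < s" "poly (Lp (- c k)) z = 0"
        | j where "j < t" "poly (Lp (e j)) z = 0"
      by (auto simp: polyA prod_zero_iff)
    thus ?thesis
    proof cases
      case 1 thus ?thesis by (intro exI[of _ 1]) auto
    next
      case 2 thus ?thesis using cneg[OF 2(1)] by (intro exI[of _ "- c k"]) auto
    next
      case 3 thus ?thesis using epos[OF 3(1)] by (intro exI[of _ "e j"]) auto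
    qed
  qed
  have Broot: "\<exists>a. Re a < 0 \<and> poly (Lp a) z = 0" if "poly Bp z = 0" for z
  proof -
    from that consider "poly (Lp (-1)) z = 0" | k where "k < s" "poly (Lp (c k)) z = 0"
        | j where "j < t" "poly (Lp (- e j)) z = 0"
      by (auto simp: polyB prod_zero_iff)
    thus ?thesis
    proof cases
      case 1 thus ?thesis by (intro exI[of _ "-1"]) auto
    next
      case 2 thus ?thesis using cneg[OF 2(1)] by (intro exI[of _ "c k"]) auto
    next
      case 3 thus ?thesis using epos[OF 3(1)] by (intro exI[of _ "- e j"]) auto
    qed
  qed
  have cop: "coprime p q"
  proof (rule coprime_real[OF q_nz])
    fix z assume "poly (cpoly p) z = 0"
    hence hp: "poly Pp z = 0" using cp by simp
    show "poly (cpoly q) z \<noteq> 0"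
    proof
      assume "poly (cpoly q) z = 0"
      hence hq: "poly Qp z = 0" using cq by simp
      have a0: "poly Ap z = 0"
      proof (cases "poly Bp z = 0")
        case True thus ?thesis using hq by (simp add: polyQ)
      next
        case False
        hence "poly Bp z + \<kappa> * poly Ap z = 0" using hp by (simp add: polyP)
        moreover have "poly Qp z = poly Ap z ^ 2 + poly Bp z * (poly Bp z + \<kappa> * poly Ap z)"
          by (simp add: polyQ algebra_simps power2_eq_square)
        ultimately have "poly Qp z = poly Ap z ^ 2" by simp
        thus ?thesis using hq by simp
      qed
      have b0: "poly Bp z = 0" using hp a0 by (simp add: polyP)
      obtain a where a: "Re a > 0" "poly (Lp a) z = 0" using Aroot[OF a0] by blast
      obtain b where b: "Re b < 0" "poly (Lp b) z = 0" using Broot[OF b0] by blast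
      have "a = b" using Lp_root_eq[OF a(2) b(2)] .
      thus False using a b by simp
    qed
  qed

  have ord: "order z (cpoly p) = (if z = -1 then 2 * m else 0)
          + card {k. k < s \<and> z = cis (\<theta> k)} + card {k. k < s \<and> z = cis (- \<theta> k)}"
    if zs: "z \<in> stopband" for z
  proof -
    have o1: "order z Pp = order z Bp"
      using Pp_nz S_nz[OF zs] by (simp add: Pp_def order_mult order_0I)
    have Lnz: "Lp (-1) ^ m \<noteq> 0" "(\<Prod>k<s. Lp (c k)) \<noteq> 0" "(\<Prod>j<t. Lp (- e j)) \<noteq> 0"
      by (simp_all add: Lp_nz)
    have o2: "order z Bp = order z (Lp (-1) ^ m) + order z (\<Prod>k<s. Lp (c k)) + order z (\<Prod>j<t. Lp (- e j))"
      unfolding Bp_def using Lnz by (simp add: order_mult)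
    have o3: "order z (Lp (-1) ^ m) = (if z = -1 then 2 * m else 0)"
    proof -
      have "order z (Lp (-1)) = (if z = -1 then 2 else 0)"
        unfolding Lp_m1 using order_lin[of z "-1"] by (subst order_pow) auto
      thus ?thesis by (simp add: order_pow Lp_nz)
    qed
    have o4: "order z (\<Prod>k<s. Lp (c k)) = card {k. k < s \<and> z = cis (\<theta> k)} + card {k. k < s \<and> z = cis (- \<theta> k)}"
    proof -
      have "order z (\<Prod>k<s. Lp (c k)) = (\<Sum>k<s. order z (Lp (c k)))"
        by (rule order_prod) (auto simp: Lp_nz)
      also have "\<dots> = (\<Sum>k<s. (if z = cis (\<theta> k) then 1 else 0) + (if z = cis (- \<theta> k) then 1 else 0))"
      proof (rule sum.cong[OF refl])
        fix k
        have nz: "[:- cis (\<theta> k), 1:] * [:- cis (- \<theta> k), 1:] \<noteq> 0" by simp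
        show "order z (Lp (c k)) = (if z = cis (\<theta> k) then 1 else 0) + (if z = cis (- \<theta> k) then 1 else 0)"
          unfolding c_def Lp_cos order_mult[OF nz] order_lin ..
      qed
      also have "\<dots> = card {k. k < s \<and> z = cis (\<theta> k)} + card {k. k < s \<and> z = cis (- \<theta> k)}"
        by (simp add: sum.distrib sum_ind)
      finally show ?thesis .
    qed
    have o5: "order z (\<Prod>j<t. Lp (- e j)) = 0"
    proof -
      have "order z (\<Prod>j<t. Lp (- e j)) = (\<Sum>j<t. order z (Lp (- e j)))"
        by (rule order_prod) (auto simp: Lp_nz)
      also have "\<dots> = 0"
      proof (rule sum.neutral, rule ballI)
        fix j assume "j \<in> {..<t}"
        hence j: "j < t" by simp
        have "poly (Lp (- e j)) z \<noteq> 0"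
        proof
          assume "poly (Lp (- e j)) z = 0"
          hence "- e j = of_real (Re z)" using unit_root stopband_prop(1)[OF zs] by blast
          hence "e j = of_real (- Re z)" by (metis minus_minus of_real_minus)
          moreover have "\<bar>- Re z\<bar> \<le> 1" using abs_Re_le_cmod[of z] stopband_prop(1)[OF zs] by simp
          ultimately show False using e_nonunit[OF j] by blast
        qed
        thus "order z (Lp (- e j)) = 0" by (rule order_0I)
      qed
      finally show ?thesis .
    qed
    show ?thesis using cp o1 o2 o3 o4 o5 by simp
  qed

  have rr: "rat_repr H p q" unfolding rat_repr_def using q_nz fin1 cp cq by simp
  have fin2: "finite {z. H z ^ 2 + H (- z) ^ 2 \<noteq> 1}"
  proof (rule finite_subset)
    show "finite ({0} \<union> {z. poly Ap z = 0} \<union> {z. poly Bp z = 0} \<union> {z. poly Qp z = 0})"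
      using poly_roots_finite[OF Ap_nz] poly_roots_finite[OF Bp_nz] poly_roots_finite[OF Qp_nz] by simp
    show "{z. H z ^ 2 + H (- z) ^ 2 \<noteq> 1} \<subseteq> {0} \<union> {z. poly Ap z = 0} \<union> {z. poly Bp z = 0} \<union> {z. poly Qp z = 0}"
    proof (rule subsetI, rule ccontr)
      fix z assume z1: "z \<in> {z. H z ^ 2 + H (- z) ^ 2 \<noteq> 1}"
        and z2: "z \<notin> {0} \<union> {z. poly Ap z = 0} \<union> {z. poly Bp z = 0} \<union> {z. poly Qp z = 0}"
      define a where "a = poly Ap z"
      define b where "b = poly Bp z"
      have nz: "z \<noteq> 0" "a \<noteq> 0" "b \<noteq> 0" "a^2 + \<kappa> * (a * b) + b^2 \<noteq> 0"
        using z2 by (auto simp: a_def b_def polyQ)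
      have h1: "H z = b * (b + \<kappa> * a) / (a^2 + \<kappa> * (a * b) + b^2)"
        using Hz[of z] nz by (simp add: polyP polyQ a_def b_def)
      have h2: "H (- z) = a * (a + \<kappa> * b) / (a^2 + \<kappa> * (a * b) + b^2)"
        using Hz[of "- z"] nz by (simp add: polyP polyQ ABneg a_def b_def algebra_simps)
      have key: "(b * (b + \<kappa> * a))^2 + (a * (a + \<kappa> * b))^2 = (a^2 + \<kappa> * (a * b) + b^2)^2"
        using kk by (rule key_id)
      have "H z ^ 2 + H (- z) ^ 2 = 1"
        unfolding h1 h2 using nz(4) key by (simp add: power_divide add_divide_distrib[symmetric])
      thus False using z1 by simp
    qed
  qed
  have fin3: "finite {z. z \<noteq> 0 \<and> H z \<noteq> H (inverse z)}"
  proof -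
    have "{z. z \<noteq> 0 \<and> H z \<noteq> H (inverse z)} = {}"
    proof -
      have "H (inverse z) = H z" for z by (simp only: H_def Hfilt_def eta_inv)
      thus ?thesis by auto
    qed
    thus ?thesis by (metis finite.emptyI)
  qed
  have zs: "zero_sym H" unfolding zero_sym_def using rr fin2 fin3 by blast
  have ex: "\<exists>p q. rat_repr H p q \<and> coprime p q \<and> p \<noteq> 0 \<and>
       (\<forall>z\<in>stopband. order z (cpoly p) =
          (if z = -1 then 2 * m else 0)
          + card {k. k < s \<and> z = cis (\<theta> k)} + card {k. k < s \<and> z = cis (- \<theta> k)})"
    apply (rule exI[of _ p], rule exI[of _ q])
    using rr cop p_nz ord by simp
  show ?thesis using zs ex by (simp only: H_def)
qed

end
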